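(* Let $(T,\eta,(-)^\#,\sqsubseteq,\Uparrow)$ be a while-monad on $\mathbf{Set}$, $(\Omega,\le)$ a complete lattice and $o:T\Omega\to\Omega$ a meet-preserving Eilenberg–Moore $T$-algebra such that $o(\bigsqcup_i c_i)=\bigwedge_i o(c_i)$ for every $\omega$-chain $(c_i)$ in $(T\Omega,\sqsubseteq_\Omega)$ and $o(\Uparrow_\Omega)=\top$. Then for every condition $b$ and program $P$, $\llbracket\mathtt{while}\ b\ \{P\}\rrbracket^c=\mu\Psi$, where $\mu\Psi$ is the least fixpoint, in the complete lattice of join-preserving maps $\mathcal P_\Omega(\mathbb M)\to\mathcal P_\Omega(\mathbb M)$ ordered pointwise, of $\Psi(f)=\lambda\phi.\ f(\llbracket P\rrbracket^c(\phi\wedge_{\mathbb M}\mathrm{grd}_b^{\mathrm{tt}}))\vee_{\mathbb M}(\phi\wedge_{\mathbb M}\mathrm{grd}_b^{\mathrm{ff}})$.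
   Context: Fix a set of values $\mathbb V$, a finite set of variables $X$, and memories $\mathbb M=\mathbb V^X$. Programs: $P::=\mathtt{skip}\mid P;P\mid x:=e\mid \mathtt{if}\ b\ \{P\}\ \mathtt{else}\ \{P\}\mid \mathtt{while}\ b\ \{P\}$. Each condition $b$ has a given interpretation $\llbracket b\rrbracket:\mathbb M\to\{\mathrm{ff},\mathrm{tt}\}$. A while-monad on $\mathbf{Set}$ is a monad $(T,\eta,(-)^\#)$ on $\mathbf{Set}$ together with an $\omega$-cpo structure $(\sqsubseteq_X,\Uparrow_X)$ (least element $\Uparrow_X$, sups $\bigsqcup$ of $\omega$-chains) on each $TX$, such that, with $\sqsubseteq_{X,Y}$ the pointwise order on Kleisli maps $\mathbf{Set}_T(X,Y)=\mathbf{Set}(X,TY)$ and $\Uparrow_{X,Y}=\lambda x.\Uparrow_Y$: Kleisli composition $g\bullet f=g^\#\circ f$ is monotone and $\omega$-continuous in each argument, and $f\bullet\Uparrow_{X,Y}=\Uparrow_{X,Z}$. Monadic semantics: each assignment has a given $\llbracket x:=e\rrbracket\in\mathbf{Set}_T(\mathbb M,\mathbb M)$, and $\llbracket\mathtt{skip}\rrbracket_T=\eta_{\mathbb M}$, $\llbracket P;P'\rrbracket_T=\llbracket P'\rrbracket_T\bullet\llbracket P\rrbracket_T$, $\llbracket x:=e\rrbracket_T=\llbracket x:=e\rrbracket$, $\llbracket\mathtt{if}\ b\ \{P_1\}\ \mathtt{else}\ \{P_2\}\rrbracket_T=\lambda\rho.$ if $\llbracket b\rrbracket\rho=\mathrm{tt}$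 then $\llbracket P_1\rrbracket_T(\rho)$ else $\llbracket P_2\rrbracket_T(\rho)$, $\llbracket\mathtt{while}\ b\ \{P\}\rrbracket_T=\mu\Phi$ (least fixpoint w.r.t. $\sqsubseteq_{\mathbb M,\mathbb M}$) with $\Phi(f)=\lambda\rho.$ if $\llbracket b\rrbracket\rho=\mathrm{tt}$ then $(f\bullet\llbracket P\rrbracket_T)(\rho)$ else $\eta_{\mathbb M}(\rho)$. $\mathcal P_\Omega(Y)=(\mathbf{Set}(Y,\Omega),\le_Y)$ with pointwise order and lattice operations $\wedge_Y,\vee_Y,\bot_Y,\top_Y$. An Eilenberg–Moore algebra $o$ is meet-preserving if each $\phi\mapsto o\circ T\phi:\mathcal P_\Omega(Y)\to\mathcal P_\Omega(TY)$ preserves arbitrary meets. For $f\in\mathbf{Set}_T(Y,Z)$, $wp^o(f)(\phi)=o\circ T\phi\circ f$ and $sp^o(f)$ is the left adjoint of $wp^o(f)$. The collecting semantics is $\llbracket P\rrbracket^c=sp^o(\llbracket P\rrbracket_T)$. $\mathrm{grd}_b^v(\rho)=\top$ if $\llbracket b\rrbracket\rho=v$, else $\bot$. *)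

theory Defs
  imports Main
begin

definition omega_chain :: "('a \<Rightarrow> 'a \<Rightarrow> bool) \<Rightarrow> (nat \<Rightarrow> 'a) \<Rightarrow> bool" where
  "omega_chain le c \<longleftrightarrow> (\<forall>i. le (c i) (c (Suc i)))"

definition is_lub :: "('a \<Rightarrow> 'a \<Rightarrow> bool) \<Rightarrow> (nat \<Rightarrow> 'a) \<Rightarrow> 'a \<Rightarrow> bool" where
  "is_lub le c x \<longleftrightarrow> (\<forall>i. le (c i) x) \<and> (\<forall>y. (\<forall>i. le (c i) y) \<longrightarrow> le x y)"

definition lub :: "('a \<Rightarrow> 'a \<Rightarrow> bool) \<Rightarrow> (nat \<Rightarrow> 'a) \<Rightarrow> 'a" where
  "lub le c = (THE x. is_lub le c x)"

definition omega_cpo :: "('a \<Rightarrow> 'a \<Rightarrow> bool) \<Rightarrow> 'a \<Rightarrow> bool" where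
  "omega_cpo le bt \<longleftrightarrow>
     (\<forall>x. le x x) \<and> (\<forall>x y z. le x y \<longrightarrow> le y z \<longrightarrow> le x z) \<and>
     (\<forall>x y. le x y \<longrightarrow> le y x \<longrightarrow> x = y) \<and>
     (\<forall>x. le bt x) \<and> (\<forall>c. omega_chain le c \<longrightarrow> (\<exists>x. is_lub le c x))"

definition kle :: "('a \<Rightarrow> 'a \<Rightarrow> bool) \<Rightarrow> ('x \<Rightarrow> 'a) \<Rightarrow> ('x \<Rightarrow> 'a) \<Rightarrow> bool" where
  "kle le f g \<longleftrightarrow> (\<forall>x. le (f x) (g x))"

definition lfp_wrt :: "('a \<Rightarrow> 'a \<Rightarrow> bool) \<Rightarrow> ('a \<Rightarrow> 'a) \<Rightarrow> 'a" where
  "lfp_wrt le F = (THE x. F x = x \<and> (\<forall>y. F y = y \<longrightarrow> le x y))"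

section \<open>While-monads on Set, restricted to the objects M (memories) and Omega\<close>

text \<open>Kleisli-triple presentation: units etaM, etaO and Kleisli extensions
  bXY :: (X => T Y) => T X => T Y for X, Y in {M, Omega}.  The types 'tm, 'to
  play the roles of T M and T Omega.\<close>

definition while_monad ::
  "('m \<Rightarrow> 'tm) \<Rightarrow> ('o \<Rightarrow> 'to) \<Rightarrow>
   (('m \<Rightarrow> 'tm) \<Rightarrow> 'tm \<Rightarrow> 'tm) \<Rightarrow> (('m \<Rightarrow> 'to) \<Rightarrow> 'tm \<Rightarrow> 'to) \<Rightarrow>
   (('o \<Rightarrow> 'tm) \<Rightarrow> 'to \<Rightarrow> 'tm) \<Rightarrow> (('o \<Rightarrow> 'to) \<Rightarrow> 'to \<Rightarrow> 'to) \<Rightarrow>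
   ('tm \<Rightarrow> 'tm \<Rightarrow> bool) \<Rightarrow> 'tm \<Rightarrow> ('to \<Rightarrow> 'to \<Rightarrow> bool) \<Rightarrow> 'to \<Rightarrow> bool" where
  "while_monad etaM etaO bMM bMO bOM bOO leM botM leO botO \<longleftrightarrow>
   \<comment> \<open>monad laws: left unit\<close>
   (\<forall>f x. bMM f (etaM x) = f x) \<and> (\<forall>f x. bMO f (etaM x) = f x) \<and>
   (\<forall>f x. bOM f (etaO x) = f x) \<and> (\<forall>f x. bOO f (etaO x) = f x) \<and>
   \<comment> \<open>right unit\<close>
   (\<forall>t. bMM etaM t = t) \<and> (\<forall>t. bOO etaO t = t) \<and>
   \<comment> \<open>associativity, all combinations of X, Y, Z\<close>
   (\<forall>f g t. bMM g (bMM f t) = bMM (\<lambda>x. bMM g (f x)) t) \<and>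
   (\<forall>f g t. bMO g (bMM f t) = bMO (\<lambda>x. bMO g (f x)) t) \<and>
   (\<forall>f g t. bOM g (bMO f t) = bMM (\<lambda>x. bOM g (f x)) t) \<and>
   (\<forall>f g t. bOO g (bMO f t) = bMO (\<lambda>x. bOO g (f x)) t) \<and>
   (\<forall>f g t. bMM g (bOM f t) = bOM (\<lambda>x. bMM g (f x)) t) \<and>
   (\<forall>f g t. bMO g (bOM f t) = bOO (\<lambda>x. bMO g (f x)) t) \<and>
   (\<forall>f g t. bOM g (bOO f t) = bOM (\<lambda>x. bOM g (f x)) t) \<and>
   (\<forall>f g t. bOO g (bOO f t) = bOO (\<lambda>x. bOO g (f x)) t) \<and>
   \<comment> \<open>omega-cpo structures on T M and T Omega\<close>
   omega_cpo leM botM \<and> omega_cpo leO botO \<and>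
   \<comment> \<open>Kleisli composition monotone in each argument\<close>
   (\<forall>(f :: 'm \<Rightarrow> 'tm) g g'. kle leM g g' \<longrightarrow> kle leM (bMM g \<circ> f) (bMM g' \<circ> f)) \<and>
   (\<forall>(f :: 'm \<Rightarrow> 'tm) g g'. kle leO g g' \<longrightarrow> kle leO (bMO g \<circ> f) (bMO g' \<circ> f)) \<and>
   (\<forall>(f :: 'm \<Rightarrow> 'to) g g'. kle leM g g' \<longrightarrow> kle leM (bOM g \<circ> f) (bOM g' \<circ> f)) \<and>
   (\<forall>(f :: 'm \<Rightarrow> 'to) g g'. kle leO g g' \<longrightarrow> kle leO (bOO g \<circ> f) (bOO g' \<circ> f)) \<and>
   (\<forall>(f :: 'm \<Rightarrow> 'tm) f' g. kle leM f f' \<longrightarrow> kle leM (bMM g \<circ> f) (bMM g \<circ> f')) \<and>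
   (\<forall>(f :: 'm \<Rightarrow> 'tm) f' g. kle leM f f' \<longrightarrow> kle leO (bMO g \<circ> f) (bMO g \<circ> f')) \<and>
   (\<forall>(f :: 'm \<Rightarrow> 'to) f' g. kle leO f f' \<longrightarrow> kle leM (bOM g \<circ> f) (bOM g \<circ> f')) \<and>
   (\<forall>(f :: 'm \<Rightarrow> 'to) f' g. kle leO f f' \<longrightarrow> kle leO (bOO g \<circ> f) (bOO g \<circ> f')) \<and>
   (\<forall>(f :: 'o \<Rightarrow> 'tm) f' g. kle leM f f' \<longrightarrow> kle leM (bMM g \<circ> f) (bMM g \<circ> f')) \<and>
   (\<forall>(f :: 'o \<Rightarrow> 'tm) f' g. kle leM f f' \<longrightarrow> kle leO (bMO g \<circ> f) (bMO g \<circ> f')) \<and>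
   (\<forall>(f :: 'o \<Rightarrow> 'to) f' g. kle leO f f' \<longrightarrow> kle leM (bOM g \<circ> f) (bOM g \<circ> f')) \<and>
   (\<forall>(f :: 'o \<Rightarrow> 'to) f' g. kle leO f f' \<longrightarrow> kle leO (bOO g \<circ> f) (bOO g \<circ> f')) \<and>
   (\<forall>(f :: 'o \<Rightarrow> 'tm) g g'. kle leM g g' \<longrightarrow> kle leM (bMM g \<circ> f) (bMM g' \<circ> f)) \<and>
   (\<forall>(f :: 'o \<Rightarrow> 'tm) g g'. kle leO g g' \<longrightarrow> kle leO (bMO g \<circ> f) (bMO g' \<circ> f)) \<and>
   (\<forall>(f :: 'o \<Rightarrow> 'to) g g'. kle leM g g' \<longrightarrow> kle leM (bOM g \<circ> f) (bOM g' \<circ> f)) \<and>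
   (\<forall>(f :: 'o \<Rightarrow> 'to) g g'. kle leO g g' \<longrightarrow> kle leO (bOO g \<circ> f) (bOO g' \<circ> f)) \<and>
   \<comment> \<open>omega-continuity in the first (inner) argument: g \<bullet> (\<Squnion>i f i) = \<Squnion>i (g \<bullet> f i);
       sups of Kleisli maps are pointwise\<close>
   (\<forall>(f :: nat \<Rightarrow> 'm \<Rightarrow> 'tm) g x. (\<forall>y. omega_chain leM (\<lambda>i. f i y)) \<longrightarrow>
       bMM g (lub leM (\<lambda>i. f i x)) = lub leM (\<lambda>i. bMM g (f i x))) \<and>
   (\<forall>(f :: nat \<Rightarrow> 'm \<Rightarrow> 'tm) g x. (\<forall>y. omega_chain leM (\<lambda>i. f i y)) \<longrightarrow>
       bMO g (lub leM (\<lambda>i. f i x)) = lub leO (\<lambda>i. bMO g (f i x))) \<and>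
   (\<forall>(f :: nat \<Rightarrow> 'm \<Rightarrow> 'to) g x. (\<forall>y. omega_chain leO (\<lambda>i. f i y)) \<longrightarrow>
       bOM g (lub leO (\<lambda>i. f i x)) = lub leM (\<lambda>i. bOM g (f i x))) \<and>
   (\<forall>(f :: nat \<Rightarrow> 'm \<Rightarrow> 'to) g x. (\<forall>y. omega_chain leO (\<lambda>i. f i y)) \<longrightarrow>
       bOO g (lub leO (\<lambda>i. f i x)) = lub leO (\<lambda>i. bOO g (f i x))) \<and>
   (\<forall>(f :: nat \<Rightarrow> 'o \<Rightarrow> 'tm) g x. (\<forall>y. omega_chain leM (\<lambda>i. f i y)) \<longrightarrow>
       bMM g (lub leM (\<lambda>i. f i x)) = lub leM (\<lambda>i. bMM g (f i x))) \<and>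
   (\<forall>(f :: nat \<Rightarrow> 'o \<Rightarrow> 'tm) g x. (\<forall>y. omega_chain leM (\<lambda>i. f i y)) \<longrightarrow>
       bMO g (lub leM (\<lambda>i. f i x)) = lub leO (\<lambda>i. bMO g (f i x))) \<and>
   (\<forall>(f :: nat \<Rightarrow> 'o \<Rightarrow> 'to) g x. (\<forall>y. omega_chain leO (\<lambda>i. f i y)) \<longrightarrow>
       bOM g (lub leO (\<lambda>i. f i x)) = lub leM (\<lambda>i. bOM g (f i x))) \<and>
   (\<forall>(f :: nat \<Rightarrow> 'o \<Rightarrow> 'to) g x. (\<forall>y. omega_chain leO (\<lambda>i. f i y)) \<longrightarrow>
       bOO g (lub leO (\<lambda>i. f i x)) = lub leO (\<lambda>i. bOO g (f i x))) \<and>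
   \<comment> \<open>omega-continuity in the second (outer) argument: (\<Squnion>i g i) \<bullet> f = \<Squnion>i (g i \<bullet> f)\<close>
   (\<forall>(g :: nat \<Rightarrow> 'm \<Rightarrow> 'tm) (f :: 'm \<Rightarrow> 'tm) x. (\<forall>y. omega_chain leM (\<lambda>i. g i y)) \<longrightarrow>
       bMM (\<lambda>y. lub leM (\<lambda>i. g i y)) (f x) = lub leM (\<lambda>i. bMM (g i) (f x))) \<and>
   (\<forall>(g :: nat \<Rightarrow> 'm \<Rightarrow> 'to) (f :: 'm \<Rightarrow> 'tm) x. (\<forall>y. omega_chain leO (\<lambda>i. g i y)) \<longrightarrow>
       bMO (\<lambda>y. lub leO (\<lambda>i. g i y)) (f x) = lub leO (\<lambda>i. bMO (g i) (f x))) \<and>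
   (\<forall>(g :: nat \<Rightarrow> 'o \<Rightarrow> 'tm) (f :: 'm \<Rightarrow> 'to) x. (\<forall>y. omega_chain leM (\<lambda>i. g i y)) \<longrightarrow>
       bOM (\<lambda>y. lub leM (\<lambda>i. g i y)) (f x) = lub leM (\<lambda>i. bOM (g i) (f x))) \<and>
   (\<forall>(g :: nat \<Rightarrow> 'o \<Rightarrow> 'to) (f :: 'm \<Rightarrow> 'to) x. (\<forall>y. omega_chain leO (\<lambda>i. g i y)) \<longrightarrow>
       bOO (\<lambda>y. lub leO (\<lambda>i. g i y)) (f x) = lub leO (\<lambda>i. bOO (g i) (f x))) \<and>
   (\<forall>(g :: nat \<Rightarrow> 'm \<Rightarrow> 'tm) (f :: 'o \<Rightarrow> 'tm) x. (\<forall>y. omega_chain leM (\<lambda>i. g i y)) \<longrightarrow>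
       bMM (\<lambda>y. lub leM (\<lambda>i. g i y)) (f x) = lub leM (\<lambda>i. bMM (g i) (f x))) \<and>
   (\<forall>(g :: nat \<Rightarrow> 'm \<Rightarrow> 'to) (f :: 'o \<Rightarrow> 'tm) x. (\<forall>y. omega_chain leO (\<lambda>i. g i y)) \<longrightarrow>
       bMO (\<lambda>y. lub leO (\<lambda>i. g i y)) (f x) = lub leO (\<lambda>i. bMO (g i) (f x))) \<and>
   (\<forall>(g :: nat \<Rightarrow> 'o \<Rightarrow> 'tm) (f :: 'o \<Rightarrow> 'to) x. (\<forall>y. omega_chain leM (\<lambda>i. g i y)) \<longrightarrow>
       bOM (\<lambda>y. lub leM (\<lambda>i. g i y)) (f x) = lub leM (\<lambda>i. bOM (g i) (f x))) \<and>
   (\<forall>(g :: nat \<Rightarrow> 'o \<Rightarrow> 'to) (f :: 'o \<Rightarrow> 'to) x. (\<forall>y. omega_chain leO (\<lambda>i. g i y)) \<longrightarrow>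
       bOO (\<lambda>y. lub leO (\<lambda>i. g i y)) (f x) = lub leO (\<lambda>i. bOO (g i) (f x))) \<and>
   \<comment> \<open>strictness: f \<bullet> \<Uparrow>_{X,Y} = \<Uparrow>_{X,Z}\<close>
   (\<forall>f. bMM f botM = botM) \<and> (\<forall>f. bMO f botM = botO) \<and>
   (\<forall>f. bOM f botO = botM) \<and> (\<forall>f. bOO f botO = botO)"

text \<open>EM-algebra laws in Kleisli form: o \<circ> \<eta> = id and o \<circ> f^# = o \<circ> T(o \<circ> f)
  (equivalent to o \<circ> \<mu> = o \<circ> T o).  T phi is (\<eta> \<circ> phi)^#.\<close>
definition em_algebra ::
  "('o \<Rightarrow> 'to) \<Rightarrow> (('m \<Rightarrow> 'to) \<Rightarrow> 'tm \<Rightarrow> 'to) \<Rightarrow> (('o \<Rightarrow> 'to) \<Rightarrow> 'to \<Rightarrow> 'to) \<Rightarrow> ('to \<Rightarrow> 'o) \<Rightarrow> bool" where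
  "em_algebra etaO bMO bOO alg \<longleftrightarrow>
     (\<forall>w. alg (etaO w) = w) \<and>
     (\<forall>f t. alg (bMO f t) = alg (bMO (etaO \<circ> alg \<circ> f) t)) \<and>
     (\<forall>f t. alg (bOO f t) = alg (bOO (etaO \<circ> alg \<circ> f) t))"

definition meet_preserving ::
  "('o::complete_lattice \<Rightarrow> 'to) \<Rightarrow> (('m \<Rightarrow> 'to) \<Rightarrow> 'tm \<Rightarrow> 'to) \<Rightarrow> (('o \<Rightarrow> 'to) \<Rightarrow> 'to \<Rightarrow> 'to) \<Rightarrow> ('to \<Rightarrow> 'o) \<Rightarrow> bool" where
  "meet_preserving etaO bMO bOO alg \<longleftrightarrow>
     (\<forall>S :: ('m \<Rightarrow> 'o) set. alg \<circ> bMO (etaO \<circ> Inf S) = Inf ((\<lambda>\<phi>. alg \<circ> bMO (etaO \<circ> \<phi>)) ` S)) \<and>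
     (\<forall>S :: ('o \<Rightarrow> 'o) set. alg \<circ> bOO (etaO \<circ> Inf S) = Inf ((\<lambda>\<phi>. alg \<circ> bOO (etaO \<circ> \<phi>)) ` S))"

definition wp :: "('o \<Rightarrow> 'to) \<Rightarrow> (('m \<Rightarrow> 'to) \<Rightarrow> 'tm \<Rightarrow> 'to) \<Rightarrow> ('to \<Rightarrow> 'o)
    \<Rightarrow> ('m \<Rightarrow> 'tm) \<Rightarrow> ('m \<Rightarrow> 'o) \<Rightarrow> ('m \<Rightarrow> 'o)" where
  "wp etaO bMO alg f \<phi> = alg \<circ> bMO (etaO \<circ> \<phi>) \<circ> f"

definition sp :: "('o::complete_lattice \<Rightarrow> 'to) \<Rightarrow> (('m \<Rightarrow> 'to) \<Rightarrow> 'tm \<Rightarrow> 'to) \<Rightarrow> ('to \<Rightarrow> 'o)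
    \<Rightarrow> ('m \<Rightarrow> 'tm) \<Rightarrow> ('m \<Rightarrow> 'o) \<Rightarrow> ('m \<Rightarrow> 'o)" where
  "sp etaO bMO alg f = (THE g. \<forall>\<psi> \<phi>. g \<psi> \<le> \<phi> \<longleftrightarrow> \<psi> \<le> wp etaO bMO alg f \<phi>)"

datatype ('x, 'e, 'b) prog =
    Skip
  | Seq "('x, 'e, 'b) prog" "('x, 'e, 'b) prog"
  | Assign 'x 'e
  | If 'b "('x, 'e, 'b) prog" "('x, 'e, 'b) prog"
  | While 'b "('x, 'e, 'b) prog"

text \<open>bsem: interpretation of conditions (True = tt); asem: given semantics of assignments.
  Kleisli composition g \<bullet> f = g^# \<circ> f.\<close>
primrec msem :: "('m \<Rightarrow> 'tm) \<Rightarrow> (('m \<Rightarrow> 'tm) \<Rightarrow> 'tm \<Rightarrow> 'tm) \<Rightarrow> ('tm \<Rightarrow> 'tm \<Rightarrow> bool)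
    \<Rightarrow> ('b \<Rightarrow> 'm \<Rightarrow> bool) \<Rightarrow> ('x \<Rightarrow> 'e \<Rightarrow> 'm \<Rightarrow> 'tm) \<Rightarrow> ('x, 'e, 'b) prog \<Rightarrow> 'm \<Rightarrow> 'tm" where
  "msem etaM bMM leM bsem asem Skip = etaM"
| "msem etaM bMM leM bsem asem (Seq P Q) =
     bMM (msem etaM bMM leM bsem asem Q) \<circ> msem etaM bMM leM bsem asem P"
| "msem etaM bMM leM bsem asem (Assign x e) = asem x e"
| "msem etaM bMM leM bsem asem (If b P Q) =
     (\<lambda>\<rho>. if bsem b \<rho> then msem etaM bMM leM bsem asem P \<rho> else msem etaM bMM leM bsem asem Q \<rho>)"
| "msem etaM bMM leM bsem asem (While b P) =
     lfp_wrt (kle leM)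
       (\<lambda>f \<rho>. if bsem b \<rho> then (bMM f \<circ> msem etaM bMM leM bsem asem P) \<rho> else etaM \<rho>)"

definition grd :: "('b \<Rightarrow> 'm \<Rightarrow> bool) \<Rightarrow> 'b \<Rightarrow> bool \<Rightarrow> 'm \<Rightarrow> 'o::complete_lattice" where
  "grd bsem b v \<rho> = (if bsem b \<rho> = v then top else bot)"

definition join_preserving :: "('a::complete_lattice \<Rightarrow> 'b::complete_lattice) \<Rightarrow> bool" where
  "join_preserving f \<longleftrightarrow> (\<forall>S. f (Sup S) = Sup (f ` S))"

definition jp_lfp :: "(('a::complete_lattice \<Rightarrow> 'a) \<Rightarrow> ('a \<Rightarrow> 'a)) \<Rightarrow> ('a \<Rightarrow> 'a)" where
  "jp_lfp F = (THE f. join_preserving f \<and> F f = f \<and>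
                  (\<forall>g. join_preserving g \<longrightarrow> F g = g \<longrightarrow> f \<le> g))"

end

theory Submission
  imports Defs
begin

lemma cpo_refl: "omega_cpo le bt \<Longrightarrow> le x x" unfolding omega_cpo_def by blast
lemma cpo_trans: "omega_cpo le bt \<Longrightarrow> le x y \<Longrightarrow> le y z \<Longrightarrow> le x z"
  unfolding omega_cpo_def by blast
lemma cpo_antisym: "omega_cpo le bt \<Longrightarrow> le x y \<Longrightarrow> le y x \<Longrightarrow> x = y"
  unfolding omega_cpo_def by blast
lemma cpo_bot: "omega_cpo le bt \<Longrightarrow> le bt x" unfolding omega_cpo_def by blast
lemma cpo_ex: "omega_cpo le bt \<Longrightarrow> omega_chain le c \<Longrightarrow> \<exists>x. is_lub le c x"
  unfolding omega_cpo_def by blast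

lemma cpo_lub_eq:
  assumes "omega_cpo le bt" "is_lub le c x"
  shows "lub le c = x"
  unfolding lub_def
proof (rule the_equality)
  show "is_lub le c x" by fact
  fix y assume y: "is_lub le c y"
  have "le x y" using assms(2) y unfolding is_lub_def by blast
  moreover have "le y x" using assms(2) y unfolding is_lub_def by blast
  ultimately show "y = x" using cpo_antisym[OF assms(1)] by blast
qed

lemma cpo_lub:
  assumes "omega_cpo le bt" "omega_chain le c"
  shows "is_lub le c (lub le c)"
proof -
  obtain x where x: "is_lub le c x" using cpo_ex[OF assms] by blast
  with cpo_lub_eq[OF assms(1) x] show ?thesis by simp
qed

lemma cpo_lub_upper: "omega_cpo le bt \<Longrightarrow> omega_chain le c \<Longrightarrow> le (c i) (lub le c)"
  by (drule (1) cpo_lub) (simp add: is_lub_def)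
lemma cpo_lub_least: "omega_cpo le bt \<Longrightarrow> omega_chain le c \<Longrightarrow> (\<And>i. le (c i) y) \<Longrightarrow> le (lub le c) y"
  by (drule (1) cpo_lub) (simp add: is_lub_def)

lemma cpo_lub_shift:
  assumes "omega_cpo le bt" "omega_chain le c"
  shows "lub le (\<lambda>i. c (Suc i)) = lub le c"
proof (rule cpo_lub_eq[OF assms(1)])
  show "is_lub le (\<lambda>i. c (Suc i)) (lub le c)"
    unfolding is_lub_def
  proof (intro conjI allI impI)
    fix i show "le (c (Suc i)) (lub le c)" by (rule cpo_lub_upper[OF assms])
  next
    fix y assume h: "\<forall>i. le (c (Suc i)) y"
    have "\<And>i. le (c i) y"
    proof -
      fix i
      have "le (c i) (c (Suc i))" using assms(2) unfolding omega_chain_def by blast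
      then show "le (c i) y" using h cpo_trans[OF assms(1)] by blast
    qed
    then show "le (lub le c) y" by (rule cpo_lub_least[OF assms])
  qed
qed

lemma cpo_lub_const:
  assumes "omega_cpo le bt"
  shows "lub le (\<lambda>i. a) = a"
  by (rule cpo_lub_eq[OF assms]) (simp add: is_lub_def cpo_refl[OF assms])

definition adj :: "('a::complete_lattice \<Rightarrow> 'b::complete_lattice) \<Rightarrow> ('b \<Rightarrow> 'a) \<Rightarrow> bool" where
  "adj l r \<longleftrightarrow> (\<forall>x y. l x \<le> y \<longleftrightarrow> x \<le> r y)"

lemma adj_left_unique: "adj l r \<Longrightarrow> adj l' r \<Longrightarrow> l = l'"
  unfolding adj_def by (metis antisym ext order_refl)

lemma adj_right_unique: "adj l r \<Longrightarrow> adj l r' \<Longrightarrow> r = r'"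
  unfolding adj_def by (metis antisym ext order_refl)

lemma adj_mono_right: "adj l r \<Longrightarrow> a \<le> b \<Longrightarrow> r a \<le> r b"
  unfolding adj_def by (metis order_refl order_trans)

lemma adj_join_preserving: "adj l r \<Longrightarrow> join_preserving l"
  unfolding join_preserving_def
proof
  fix S assume a: "adj l r"
  have "\<And>y. l (Sup S) \<le> y \<longleftrightarrow> Sup (l ` S) \<le> y"
    using a unfolding adj_def by (simp add: Sup_le_iff)
  then show "l (Sup S) = Sup (l ` S)" by (metis antisym order_refl)
qed

lemma inf_pres_adj:
  assumes "\<And>S. r (Inf S) = Inf (r ` S)"
  shows "adj (\<lambda>x. Inf {y. x \<le> r y}) r"
  unfolding adj_def
proof (intro allI iffI)
  have mono: "\<And>a b. a \<le> b \<Longrightarrow> r a \<le> r b"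
  proof -
    fix a b :: 'a assume "a \<le> b"
    then have "r a = r (Inf {a, b})" by (simp add: inf_absorb1)
    also have "\<dots> = inf (r a) (r b)" using assms[of "{a, b}"] by simp
    finally show "r a \<le> r b" by (metis inf.cobounded2)
  qed
  fix x y
  assume h: "Inf {y. x \<le> r y} \<le> y"
  have "x \<le> r (Inf {y. x \<le> r y})" using assms by (simp add: le_INF_iff)
  also have "\<dots> \<le> r y" using mono[OF h] .
  finally show "x \<le> r y" .
next
  fix x y assume "x \<le> r y"
  then show "Inf {y. x \<le> r y} \<le> y" by (simp add: Inf_lower)
qed

lemma sup_pres_adj:
  assumes "join_preserving l"
  shows "adj l (\<lambda>y. Sup {x. l x \<le> y})"
  unfolding adj_def
proof (intro allI iffI)
  fix x y assume "l x \<le> y" then show "x \<le> Sup {x. l x \<le> y}" by (simp add: Sup_upper)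
next
  fix x y assume h: "x \<le> Sup {x. l x \<le> y}"
  have mono: "\<And>a b. a \<le> b \<Longrightarrow> l a \<le> l b"
  proof -
    fix a b :: 'a assume "a \<le> b"
    then have "l b = l (Sup {a, b})" by (simp add: sup_absorb2)
    also have "\<dots> = sup (l a) (l b)"
    proof -
      have "l (Sup {a, b}) = Sup (l ` {a, b})" using assms unfolding join_preserving_def by blast
      then show ?thesis by simp
    qed
    finally show "l a \<le> l b" by (metis sup.cobounded1)
  qed
  have "l x \<le> l (Sup {x. l x \<le> y})" using mono[OF h] .
  also have "\<dots> = Sup (l ` {x. l x \<le> y})" using assms unfolding join_preserving_def by simp
  also have "\<dots> \<le> y" by (auto intro: Sup_least)
  finally show "l x \<le> y" .
qed

lemma adj_sp:
  assumes "\<And>S. wp etaO bMO alg f (Inf S) = Inf (wp etaO bMO alg f ` S)"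
  shows "adj (sp etaO bMO alg f) (wp etaO bMO alg f)"
proof -
  have a: "adj (\<lambda>x. Inf {y. x \<le> wp etaO bMO alg f y}) (wp etaO bMO alg f)"
    by (rule inf_pres_adj) (rule assms)
  have "sp etaO bMO alg f = (\<lambda>x. Inf {y. x \<le> wp etaO bMO alg f y})"
    unfolding sp_def
  proof (rule the_equality)
    show "\<forall>\<psi> \<phi>. Inf {y. \<psi> \<le> wp etaO bMO alg f y} \<le> \<phi> \<longleftrightarrow> \<psi> \<le> wp etaO bMO alg f \<phi>"
      using a unfolding adj_def by blast
    fix g assume "\<forall>\<psi> \<phi>. g \<psi> \<le> \<phi> \<longleftrightarrow> \<psi> \<le> wp etaO bMO alg f \<phi>"
    then have "adj g (wp etaO bMO alg f)" unfolding adj_def by blast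
    then show "g = (\<lambda>x. Inf {y. x \<le> wp etaO bMO alg f y})" using adj_left_unique a by blast
  qed
  with a show ?thesis by simp
qed

lemma adj_step:
  fixes spP wpP :: "('m \<Rightarrow> 'o::complete_lattice) \<Rightarrow> ('m \<Rightarrow> 'o)"
    and g gR :: "('m \<Rightarrow> 'o) \<Rightarrow> ('m \<Rightarrow> 'o)"
  assumes "adj spP wpP" "adj g gR"
  shows "adj (\<lambda>\<phi>. sup (g (spP (inf \<phi> (grd bsem b True)))) (inf \<phi> (grd bsem b False)))
             (\<lambda>\<phi>' \<rho>. if bsem b \<rho> then wpP (gR \<phi>') \<rho> else \<phi>' \<rho>)"
  unfolding adj_def
proof (intro allI)
  fix \<phi> \<phi>' :: "'m \<Rightarrow> 'o"
  have "(sup (g (spP (inf \<phi> (grd bsem b True)))) (inf \<phi> (grd bsem b False)) \<le> \<phi>')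
      = (inf \<phi> (grd bsem b True) \<le> wpP (gR \<phi>') \<and> inf \<phi> (grd bsem b False) \<le> \<phi>')"
    using assms unfolding adj_def by simp
  also have "\<dots> = (\<phi> \<le> (\<lambda>\<rho>. if bsem b \<rho> then wpP (gR \<phi>') \<rho> else \<phi>' \<rho>))"
    unfolding le_fun_def grd_def inf_fun_def
    by (auto split: if_splits)
  finally show "(sup (g (spP (inf \<phi> (grd bsem b True)))) (inf \<phi> (grd bsem b False)) \<le> \<phi>')
      = (\<phi> \<le> (\<lambda>\<rho>. if bsem b \<rho> then wpP (gR \<phi>') \<rho> else \<phi>' \<rho>))" .
qed

theorem mainTheorem4:
  fixes etaM :: "('x::finite \<Rightarrow> 'v) \<Rightarrow> 'tm" and etaO :: "'o::complete_lattice \<Rightarrow> 'to"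
    and bMM :: "(('x \<Rightarrow> 'v) \<Rightarrow> 'tm) \<Rightarrow> 'tm \<Rightarrow> 'tm"
    and bMO :: "(('x \<Rightarrow> 'v) \<Rightarrow> 'to) \<Rightarrow> 'tm \<Rightarrow> 'to"
    and bOM :: "('o \<Rightarrow> 'tm) \<Rightarrow> 'to \<Rightarrow> 'tm"
    and bOO :: "('o \<Rightarrow> 'to) \<Rightarrow> 'to \<Rightarrow> 'to"
    and leM :: "'tm \<Rightarrow> 'tm \<Rightarrow> bool" and botM :: 'tm
    and leO :: "'to \<Rightarrow> 'to \<Rightarrow> bool" and botO :: 'to
    and alg :: "'to \<Rightarrow> 'o"
    and bsem :: "'b \<Rightarrow> ('x \<Rightarrow> 'v) \<Rightarrow> bool"
    and asem :: "'x \<Rightarrow> 'e \<Rightarrow> ('x \<Rightarrow> 'v) \<Rightarrow> 'tm"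
    and b :: 'b and P :: "('x, 'e, 'b) prog"
  assumes wm: "while_monad etaM etaO bMM bMO bOM bOO leM botM leO botO"
    and em: "em_algebra etaO bMO bOO alg"
    and mp: "meet_preserving etaO bMO bOO alg"
    and cont: "\<And>c. omega_chain leO c \<Longrightarrow> alg (lub leO c) = (INF i. alg (c i))"
    and strict: "alg botO = top"
  shows "sp etaO bMO alg (msem etaM bMM leM bsem asem (While b P)) =
         jp_lfp (\<lambda>f \<phi>. sup (f (sp etaO bMO alg (msem etaM bMM leM bsem asem P) (inf \<phi> (grd bsem b True))))
                           (inf \<phi> (grd bsem b False)))"
  proof -
  have F1: "\<forall>f x. bMO f (etaM x) = f x" using wm unfolding while_monad_def by (elim conjE) assumption
  have F2: "\<forall>f g t. bMO g (bMM f t) = bMO (\<lambda>x. bMO g (f x)) t"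
    using wm unfolding while_monad_def by (elim conjE) assumption
  have F3: "omega_cpo leM botM" using wm unfolding while_monad_def by (elim conjE) assumption
  have F4: "\<forall>(f :: ('x \<Rightarrow> 'v) \<Rightarrow> 'tm) g g'. kle leM g g' \<longrightarrow> kle leM (bMM g \<circ> f) (bMM g' \<circ> f)"
    using wm unfolding while_monad_def by (elim conjE) assumption
  have F5: "\<forall>(f :: ('x \<Rightarrow> 'v) \<Rightarrow> 'tm) f' g. kle leM f f' \<longrightarrow> kle leO (bMO g \<circ> f) (bMO g \<circ> f')"
    using wm unfolding while_monad_def by (elim conjE) assumption
  have F6: "\<forall>(f :: nat \<Rightarrow> ('x \<Rightarrow> 'v) \<Rightarrow> 'tm) g x. (\<forall>y. omega_chain leM (\<lambda>i. f i y)) \<longrightarrow>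
       bMO g (lub leM (\<lambda>i. f i x)) = lub leO (\<lambda>i. bMO g (f i x))"
    using wm unfolding while_monad_def by (elim conjE) assumption
  have F7: "\<forall>(g :: nat \<Rightarrow> ('x \<Rightarrow> 'v) \<Rightarrow> 'tm) (f :: ('x \<Rightarrow> 'v) \<Rightarrow> 'tm) x. (\<forall>y. omega_chain leM (\<lambda>i. g i y)) \<longrightarrow>
       bMM (\<lambda>y. lub leM (\<lambda>i. g i y)) (f x) = lub leM (\<lambda>i. bMM (g i) (f x))"
    using wm unfolding while_monad_def by (elim conjE) assumption
  have F8: "\<forall>f. bMO f botM = botO" using wm unfolding while_monad_def by (elim conjE) assumption
  have E1: "\<And>w. alg (etaO w) = w" using em unfolding em_algebra_def by blast
  have E2: "\<And>f t. alg (bMO f t) = alg (bMO (etaO \<circ> alg \<circ> f) t)" using em unfolding em_algebra_def by blast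

  define PM where "PM = msem etaM bMM leM bsem asem P"
  define Phi where "Phi = (\<lambda>f \<rho>. if bsem b \<rho> then (bMM f \<circ> PM) \<rho> else etaM \<rho>)"
  have Wdef: "msem etaM bMM leM bsem asem (While b P) = lfp_wrt (kle leM) Phi"
    unfolding PM_def Phi_def by simp
  define c where "c = (\<lambda>n. (Phi ^^ n) (\<lambda>_. botM))"
  have monoPhi: "\<And>(f :: ('x \<Rightarrow> 'v) \<Rightarrow> 'tm) g. kle leM f g \<Longrightarrow> kle leM (Phi f) (Phi g)"
  proof -
    fix f g :: "('x \<Rightarrow> 'v) \<Rightarrow> 'tm" assume "kle leM f g"
    then have "kle leM (bMM f \<circ> PM) (bMM g \<circ> PM)" using F4 by blast
    then show "kle leM (Phi f) (Phi g)"
      unfolding kle_def Phi_def by (simp add: cpo_refl[OF F3])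
  qed
  have chain: "\<And>n. kle leM (c n) (c (Suc n))"
  proof -
    fix n show "kle leM (c n) (c (Suc n))"
    proof (induction n)
      case 0 show ?case unfolding kle_def c_def by (simp add: cpo_bot[OF F3])
    next
      case (Suc n)
      then have "kle leM (Phi (c n)) (Phi (c (Suc n)))" by (rule monoPhi)
      then show ?case by (simp add: c_def)
    qed
  qed
  have chainpt: "\<And>y. omega_chain leM (\<lambda>i. c i y)"
    using chain unfolding omega_chain_def kle_def by blast
  define L where "L = (\<lambda>\<rho>. lub leM (\<lambda>i. c i \<rho>))"
  have PhiL: "Phi L = L"
  proof (rule ext)
    fix \<rho>
    have "Phi L \<rho> = lub leM (\<lambda>i. Phi (c i) \<rho>)"
    proof (cases "bsem b \<rho>")
      case True
      have "Phi L \<rho> = bMM (\<lambda>y. lub leM (\<lambda>i. c i y)) (PM \<rho>)" using True by (simp add: Phi_def L_def)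
      also have "\<dots> = lub leM (\<lambda>i. bMM (c i) (PM \<rho>))" using F7 chainpt by blast
      finally show ?thesis using True by (simp add: Phi_def)
    next
      case False
      then show ?thesis by (simp add: Phi_def cpo_lub_const[OF F3])
    qed
    also have "\<dots> = lub leM (\<lambda>i. c (Suc i) \<rho>)" by (simp add: c_def)
    also have "\<dots> = L \<rho>" unfolding L_def by (rule cpo_lub_shift[OF F3 chainpt])
    finally show "Phi L \<rho> = L \<rho>" .
  qed
  have least: "\<And>y. Phi y = y \<Longrightarrow> kle leM L y"
  proof -
    fix y assume fy: "Phi y = y"
    have cy: "\<And>n. kle leM (c n) y"
    proof -
      fix n show "kle leM (c n) y"
      proof (induction n)
        case 0 show ?case unfolding kle_def c_def by (simp add: cpo_bot[OF F3])
      next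
        case (Suc n)
        then have "kle leM (Phi (c n)) (Phi y)" by (rule monoPhi)
        then show ?case using fy by (simp add: c_def)
      qed
    qed
    show "kle leM L y" unfolding kle_def L_def
    proof
      fix \<rho> show "leM (lub leM (\<lambda>i. c i \<rho>)) (y \<rho>)"
        by (rule cpo_lub_least[OF F3 chainpt]) (use cy in \<open>simp add: kle_def\<close>)
    qed
  qed
  have W: "lfp_wrt (kle leM) Phi = L"
    unfolding lfp_wrt_def
  proof (rule the_equality)
    show "Phi L = L \<and> (\<forall>y. Phi y = y \<longrightarrow> kle leM L y)" using PhiL least by blast
    fix x assume x: "Phi x = x \<and> (\<forall>y. Phi y = y \<longrightarrow> kle leM x y)"
    then have "kle leM x L" using PhiL by blast
    moreover have "kle leM L x" using x least by blast
    ultimately show "x = L" unfolding kle_def using cpo_antisym[OF F3] by blast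
  qed
  have msemW: "msem etaM bMM leM bsem asem (While b P) = L" using Wdef W by simp

  have wpInf: "\<And>f S. wp etaO bMO alg f (Inf S) = Inf (wp etaO bMO alg f ` S)"
  proof -
    fix f :: "('x \<Rightarrow> 'v) \<Rightarrow> 'tm" and S :: "(('x \<Rightarrow> 'v) \<Rightarrow> 'o) set"
    have m: "alg \<circ> bMO (etaO \<circ> Inf S) = Inf ((\<lambda>\<phi>. alg \<circ> bMO (etaO \<circ> \<phi>)) ` S)"
      using mp unfolding meet_preserving_def by blast
    show "wp etaO bMO alg f (Inf S) = Inf (wp etaO bMO alg f ` S)"
    proof (rule ext)
      fix x
      have "wp etaO bMO alg f (Inf S) x = (alg \<circ> bMO (etaO \<circ> Inf S)) (f x)" by (simp add: wp_def)
      also have "\<dots> = Inf ((\<lambda>\<phi>. alg \<circ> bMO (etaO \<circ> \<phi>)) ` S) (f x)" by (simp only: m)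
      also have "\<dots> = Inf (wp etaO bMO alg f ` S) x" by (simp add: wp_def image_comp comp_def)
      finally show "wp etaO bMO alg f (Inf S) x = Inf (wp etaO bMO alg f ` S) x" .
    qed
  qed
  have adjsp: "\<And>f. adj (sp etaO bMO alg f) (wp etaO bMO alg f)"
    by (rule adj_sp) (rule wpInf)
  define Theta where "Theta = (\<lambda>h \<phi> \<rho>. if bsem b \<rho> then wp etaO bMO alg PM (h \<phi>) \<rho> else (\<phi> :: ('x \<Rightarrow> 'v) \<Rightarrow> 'o) \<rho>)"
  have wpPhi: "\<And>f. wp etaO bMO alg (Phi f) = Theta (wp etaO bMO alg f)"
  proof (intro ext)
    fix f \<phi> \<rho>
    show "wp etaO bMO alg (Phi f) \<phi> \<rho> = Theta (wp etaO bMO alg f) \<phi> \<rho>"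
    proof (cases "bsem b \<rho>")
      case True
      have "wp etaO bMO alg (Phi f) \<phi> \<rho> = alg (bMO (etaO \<circ> \<phi>) (bMM f (PM \<rho>)))"
        using True by (simp add: wp_def Phi_def)
      also have "\<dots> = alg (bMO (\<lambda>x. bMO (etaO \<circ> \<phi>) (f x)) (PM \<rho>))" using F2 by simp
      also have "\<dots> = alg (bMO (etaO \<circ> alg \<circ> (\<lambda>x. bMO (etaO \<circ> \<phi>) (f x))) (PM \<rho>))" by (rule E2)
      also have "\<dots> = Theta (wp etaO bMO alg f) \<phi> \<rho>"
        using True by (simp add: Theta_def wp_def comp_def)
      finally show ?thesis .
    next
      case False
      then show ?thesis by (simp add: Theta_def wp_def Phi_def F1 E1)
    qed
  qed
  have wpbot: "wp etaO bMO alg (\<lambda>_. botM) = (\<lambda>\<phi>. top)"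
    by (intro ext) (simp add: wp_def F8 strict)
  have wpc: "\<And>n. wp etaO bMO alg (c n) = (Theta ^^ n) (\<lambda>\<phi>. top)"
  proof -
    fix n show "wp etaO bMO alg (c n) = (Theta ^^ n) (\<lambda>\<phi>. top)"
    proof (induction n)
      case 0 show ?case using wpbot by (simp add: c_def)
    next
      case (Suc n)
      have "c (Suc n) = Phi (c n)" by (simp add: c_def)
      then show ?case using Suc wpPhi by simp
    qed
  qed
  have wpL: "\<And>\<phi> \<rho>. wp etaO bMO alg L \<phi> \<rho> = (INF n. wp etaO bMO alg (c n) \<phi> \<rho>)"
  proof -
    fix \<phi> :: "('x \<Rightarrow> 'v) \<Rightarrow> 'o" and \<rho>
    have ch: "omega_chain leO (\<lambda>i. bMO (etaO \<circ> \<phi>) (c i \<rho>))"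
      unfolding omega_chain_def
    proof
      fix i
      have "kle leO (bMO (etaO \<circ> \<phi>) \<circ> c i) (bMO (etaO \<circ> \<phi>) \<circ> c (Suc i))"
        using F5 chain by blast
      then show "leO (bMO (etaO \<circ> \<phi>) (c i \<rho>)) (bMO (etaO \<circ> \<phi>) (c (Suc i) \<rho>))"
        unfolding kle_def by simp
    qed
    have "wp etaO bMO alg L \<phi> \<rho> = alg (bMO (etaO \<circ> \<phi>) (lub leM (\<lambda>i. c i \<rho>)))"
      by (simp add: wp_def L_def)
    also have "\<dots> = alg (lub leO (\<lambda>i. bMO (etaO \<circ> \<phi>) (c i \<rho>)))" using F6 chainpt by metis
    also have "\<dots> = (INF i. alg (bMO (etaO \<circ> \<phi>) (c i \<rho>)))" by (rule cont[OF ch])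
    finally show "wp etaO bMO alg L \<phi> \<rho> = (INF n. wp etaO bMO alg (c n) \<phi> \<rho>)"
      by (simp add: wp_def)
  qed
  have monoTheta: "\<And>h h'. h \<le> h' \<Longrightarrow> Theta h \<le> Theta h'"
  proof -
    fix h h' :: "(('x \<Rightarrow> 'v) \<Rightarrow> 'o) \<Rightarrow> (('x \<Rightarrow> 'v) \<Rightarrow> 'o)"
    assume hh: "h \<le> h'"
    have "\<And>\<phi>. wp etaO bMO alg PM (h \<phi>) \<le> wp etaO bMO alg PM (h' \<phi>)"
      using adj_mono_right[OF adjsp] hh by (simp add: le_fun_def)
    then show "Theta h \<le> Theta h'" unfolding Theta_def by (simp add: le_fun_def)
  qed
  define Psi where "Psi = (\<lambda>f \<phi>. sup (f (sp etaO bMO alg PM (inf \<phi> (grd bsem b True))))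
                           (inf (\<phi> :: ('x \<Rightarrow> 'v) \<Rightarrow> 'o) (grd bsem b False)))"
  have adjPsi: "\<And>g gR. adj g gR \<Longrightarrow> adj (Psi g) (Theta gR)"
    unfolding Psi_def Theta_def by (rule adj_step[OF adjsp])
  define spL where "spL = sp etaO bMO alg L"
  have aL: "adj spL (wp etaO bMO alg L)" unfolding spL_def by (rule adjsp)
  have fixL: "Psi spL = spL"
  proof -
    have "adj (Psi spL) (Theta (wp etaO bMO alg L))" by (rule adjPsi[OF aL])
    moreover have "Theta (wp etaO bMO alg L) = wp etaO bMO alg L" using wpPhi[of L] PhiL by simp
    ultimately have "adj (Psi spL) (wp etaO bMO alg L)" by simp
    then show ?thesis using adj_left_unique aL by blast
  qed
  have jpL: "join_preserving spL" by (rule adj_join_preserving[OF aL])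
  have leastL: "\<And>g. join_preserving g \<Longrightarrow> Psi g = g \<Longrightarrow> spL \<le> g"
  proof -
    fix g assume jg: "join_preserving g" and fg: "Psi g = g"
    define gR where "gR = (\<lambda>y. Sup {x. g x \<le> y})"
    have ag: "adj g gR" unfolding gR_def by (rule sup_pres_adj[OF jg])
    have "adj (Psi g) (Theta gR)" by (rule adjPsi[OF ag])
    then have "adj g (Theta gR)" using fg by simp
    then have TgR: "Theta gR = gR" using adj_right_unique ag by blast
    have gRn: "\<And>n. gR \<le> (Theta ^^ n) (\<lambda>\<phi>. top)"
    proof -
      fix n show "gR \<le> (Theta ^^ n) (\<lambda>\<phi>. top)"
      proof (induction n)
        case 0 show ?case by (simp add: le_fun_def)
      next
        case (Suc n)
        then have "Theta gR \<le> Theta ((Theta ^^ n) (\<lambda>\<phi>. top))" by (rule monoTheta)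
        then show ?case using TgR by (simp only: funpow.simps comp_apply)
      qed
    qed
    have gRL: "\<And>\<phi> \<rho>. gR \<phi> \<rho> \<le> wp etaO bMO alg L \<phi> \<rho>"
    proof -
      fix \<phi> \<rho>
      have "\<And>n. gR \<phi> \<rho> \<le> wp etaO bMO alg (c n) \<phi> \<rho>" using gRn wpc by (simp add: le_fun_def)
      then show "gR \<phi> \<rho> \<le> wp etaO bMO alg L \<phi> \<rho>" unfolding wpL by (simp add: le_INF_iff)
    qed
    show "spL \<le> g"
    proof (rule le_funI)
      fix \<psi>
      have "\<psi> \<le> gR (g \<psi>)" using ag unfolding adj_def by blast
      also have "\<dots> \<le> wp etaO bMO alg L (g \<psi>)" using gRL by (simp add: le_fun_def)
      finally show "spL \<psi> \<le> g \<psi>" using aL unfolding adj_def by blast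
    qed
  qed
  have "jp_lfp Psi = spL"
    unfolding jp_lfp_def
  proof (rule the_equality)
    show "join_preserving spL \<and> Psi spL = spL \<and> (\<forall>g. join_preserving g \<longrightarrow> Psi g = g \<longrightarrow> spL \<le> g)"
      using jpL fixL leastL by blast
    fix f assume f: "join_preserving f \<and> Psi f = f \<and> (\<forall>g. join_preserving g \<longrightarrow> Psi g = g \<longrightarrow> f \<le> g)"
    then have "f \<le> spL" using jpL fixL by blast
    moreover have "spL \<le> f" using f leastL by blast
    ultimately show "f = spL" by (rule antisym)
  qed
  then show ?thesis unfolding msemW spL_def Psi_def PM_def by simp
qed

end
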